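(* Let $(X,T)$ be a minimal weakly mixing topological dynamical system and let $A=\{x\in X:(x,x)\text{ is a minimal point of }(X\times X,T\times T^2)\}$. Then one of the following holds: (1) $A=X$; (2) $A$ is non-empty and is a subset of first category in $X$; (3) $A$ is empty.
   Context: A topological dynamical system is $(X,T)$ with $X$ compact metric and $T$ a homeomorphism; minimal: every orbit dense; weakly mixing: $(X\times X,T\times T)$ is transitive. A point is minimal if its orbit closure is a minimal subsystem. *)

theory Defs
  imports "HOL-Analysis.Analysis"
begin

definition tds :: "'a::metric_space set \<Rightarrow> ('a \<Rightarrow> 'a) \<Rightarrow> bool" where
  "tds X T \<longleftrightarrow> compact X \<and> (\<exists>S. homeomorphism X X T S)"

definition orbit :: "'a set \<Rightarrow> ('a \<Rightarrow> 'a) \<Rightarrow> 'a \<Rightarrow> 'a set" where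
  "orbit X T x = {y \<in> X. \<exists>n::nat. (T ^^ n) x = y \<or> (T ^^ n) y = x}"

definition minimal_sys :: "'a::metric_space set \<Rightarrow> ('a \<Rightarrow> 'a) \<Rightarrow> bool" where
  "minimal_sys X T \<longleftrightarrow> tds X T \<and> (\<forall>x\<in>X. closure (orbit X T x) = X)"

definition minimal_point :: "'a::metric_space set \<Rightarrow> ('a \<Rightarrow> 'a) \<Rightarrow> 'a \<Rightarrow> bool" where
  "minimal_point X T x \<longleftrightarrow> x \<in> X \<and> minimal_sys (closure (orbit X T x)) T"

definition transitive_sys :: "'a::metric_space set \<Rightarrow> ('a \<Rightarrow> 'a) \<Rightarrow> bool" where
  "transitive_sys X T \<longleftrightarrow> (\<forall>U V. openin (top_of_set X) U \<and> openin (top_of_set X) V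
      \<and> U \<noteq> {} \<and> V \<noteq> {} \<longrightarrow> (\<exists>n::nat. (T ^^ n) ` U \<inter> V \<noteq> {}))"

definition weakly_mixing :: "'a::metric_space set \<Rightarrow> ('a \<Rightarrow> 'a) \<Rightarrow> bool" where
  "weakly_mixing X T \<longleftrightarrow> tds X T \<and> transitive_sys (X \<times> X) (map_prod T T)"

definition nowhere_dense_in :: "'a::topological_space set \<Rightarrow> 'a set \<Rightarrow> bool" where
  "nowhere_dense_in X B \<longleftrightarrow> B \<subseteq> X \<and>
     (top_of_set X) interior_of ((top_of_set X) closure_of B) = {}"

definition first_category_in :: "'a::topological_space set \<Rightarrow> 'a set \<Rightarrow> bool" where
  "first_category_in X A \<longleftrightarrow> (\<exists>F. countable F \<and> A \<subseteq> \<Union>F \<and> (\<forall>B\<in>F. nowhere_dense_in X B))"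

end

theory Submission
  imports Defs
begin


lemma mp_pow: fixes f :: "'a \<Rightarrow> 'a" and g :: "'b \<Rightarrow> 'b"
  shows "(map_prod f g ^^ n) (a,b) = ((f^^n) a, (g^^n) b)"
  by (induction n) auto

locale wmsys =
  fixes X :: "'a::metric_space set" and T S :: "'a \<Rightarrow> 'a"
  assumes hom: "homeomorphism X X T S"
    and cpt: "compact X"
    and mini: "\<forall>x\<in>X. closure (orbit X T x) = X"
    and wm: "transitive_sys (X \<times> X) (map_prod T T)"
begin

abbreviation op where "op W \<equiv> openin (top_of_set X) W"

definition NN where "NN P Q = {n. \<exists>x\<in>P. (T^^n) x \<in> Q}"

lemma homn: "homeomorphism X X (T^^n) (S^^n)"
proof (induction n)
  case 0
  then show ?case using homeomorphism_ident[of X] by (simp add: id_def)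
next
  case (Suc n)
  have h: "homeomorphism X X (T \<circ> T^^n) (S^^n \<circ> S)"
    by (rule homeomorphism_compose[OF Suc hom])
  have e1: "T^^Suc n = T \<circ> T^^n" by simp
  have e2: "S^^Suc n = S^^n \<circ> S" by (rule funpow_Suc_right)
  show ?case unfolding e1 e2 by (rule h)
qed

lemma Tn_in: "x \<in> X \<Longrightarrow> (T^^n) x \<in> X"
  using homn[of n] unfolding homeomorphism_def by blast

lemma Sn_in: "x \<in> X \<Longrightarrow> (S^^n) x \<in> X"
  using homn[of n] unfolding homeomorphism_def by blast

lemma ST: "x \<in> X \<Longrightarrow> (S^^n) ((T^^n) x) = x"
  using homn[of n] unfolding homeomorphism_def by blast

lemma TS: "x \<in> X \<Longrightarrow> (T^^n) ((S^^n) x) = x"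
  using homn[of n] unfolding homeomorphism_def by blast

lemma Tn_inj: "x \<in> X \<Longrightarrow> y \<in> X \<Longrightarrow> (T^^n) x = (T^^n) y \<Longrightarrow> x = y"
  by (metis ST)

lemma Tn_cont: "continuous_on X (T^^n)"
  using homn[of n] unfolding homeomorphism_def by blast

lemma op_pre: assumes "op W" shows "op {x\<in>X. (T^^n) x \<in> W}"
proof -
  obtain G where G: "open G" "W = X \<inter> G" using assms openin_open by blast
  have "{x\<in>X. (T^^n) x \<in> W} = X \<inter> (T^^n) -` G" using G Tn_in by auto
  then show ?thesis using continuous_openin_preimage_gen[OF Tn_cont G(1)] by simp
qed

lemma op_preS: assumes "op W" shows "op {x\<in>X. (S^^n) x \<in> W}"
proof -
  obtain G where G: "open G" "W = X \<inter> G" using assms openin_open by blast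
  have c: "continuous_on X (S^^n)" using homn[of n] unfolding homeomorphism_def by blast
  have "{x\<in>X. (S^^n) x \<in> W} = X \<inter> (S^^n) -` G" using G Sn_in by auto
  then show ?thesis using continuous_openin_preimage_gen[OF c G(1)] by simp
qed

lemma op_img: assumes "op W" shows "op ((T^^n) ` W)"
  using homeomorphism_imp_open_map[OF homn assms] .

lemma op_sub: "op W \<Longrightarrow> W \<subseteq> X"
  by (meson openin_imp_subset)

lemma pre_ne: assumes "W \<subseteq> X" "W \<noteq> {}" shows "{x\<in>X. (T^^n) x \<in> W} \<noteq> {}"
proof -
  obtain w where "w \<in> W" using assms by blast
  then have "(S^^n) w \<in> {x\<in>X. (T^^n) x \<in> W}" using assms Sn_in TS by auto
  then show ?thesis by blast
qed

lemma commT: "(T^^m) ((T^^n) x) = (T^^n) ((T^^m) x)"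
  by (metis add.commute funpow_add o_apply)

lemma TT: "(T^^m) ((T^^n) x) = (T^^(m+n)) x"
  by (simp add: funpow_add)

lemma two_pair:
  assumes "op P1" "op P2" "op Q1" "op Q2" "P1 \<noteq> {}" "P2 \<noteq> {}" "Q1 \<noteq> {}" "Q2 \<noteq> {}"
  shows "\<exists>n. n \<in> NN P1 Q1 \<and> n \<in> NN P2 Q2"
proof -
  have o1: "openin (top_of_set (X\<times>X)) (P1\<times>P2)" using assms(1,2) by (rule openin_Times)
  have o2: "openin (top_of_set (X\<times>X)) (Q1\<times>Q2)" using assms(3,4) by (rule openin_Times)
  have n1: "P1\<times>P2 \<noteq> {}" using assms(5,6) by simp
  have n2: "Q1\<times>Q2 \<noteq> {}" using assms(7,8) by simp
  have "openin (top_of_set (X\<times>X)) (P1\<times>P2) \<and> openin (top_of_set (X\<times>X)) (Q1\<times>Q2)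
      \<and> P1\<times>P2 \<noteq> {} \<and> Q1\<times>Q2 \<noteq> {} \<longrightarrow> (\<exists>n::nat. (map_prod T T ^^ n) ` (P1\<times>P2) \<inter> (Q1\<times>Q2) \<noteq> {})"
    using wm[unfolded transitive_sys_def, THEN spec[where x="P1\<times>P2"], THEN spec[where x="Q1\<times>Q2"]] .
  then have ex: "\<exists>n::nat. (map_prod T T ^^ n) ` (P1\<times>P2) \<inter> (Q1\<times>Q2) \<noteq> {}"
    using conjI[OF o1 conjI[OF o2 conjI[OF n1 n2]]] by (rule mp)
  from ex obtain n where h: "(map_prod T T ^^ n) ` (P1\<times>P2) \<inter> (Q1\<times>Q2) \<noteq> {}" ..
  have "\<exists>p. p \<in> (map_prod T T ^^ n) ` (P1\<times>P2) \<inter> (Q1\<times>Q2)" using h by (simp only: ex_in_conv not_False_eq_True)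
  then obtain p where p: "p \<in> (map_prod T T ^^ n) ` (P1\<times>P2) \<inter> (Q1\<times>Q2)" ..
  then obtain c where c: "c \<in> P1\<times>P2" "p = (map_prod T T ^^ n) c" by (meson IntD1 imageE)
  obtain a b where cab: "c = (a, b)" by (cases c)
  have ab: "a \<in> P1" "b \<in> P2" using c(1) cab by simp_all
  have pe: "p = ((T^^n) a, (T^^n) b)" using c(2) cab mp_pow by simp
  have "p \<in> Q1\<times>Q2" using p by (rule IntD2)
  then have "(T^^n) a \<in> Q1" "(T^^n) b \<in> Q2" using pe by simp_all
  then show ?thesis unfolding NN_def using ab by blast
qed

end

context wmsys begin

lemma cover:
  assumes "op Q" "Q \<noteq> {}"
  shows "\<exists>N. \<forall>z\<in>X. \<exists>j\<le>N. (T^^j) z \<in> Q \<or> (\<exists>q\<in>Q. (T^^j) q = z)"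
proof -
  define Op where "Op n = {z\<in>X. (T^^n) z \<in> Q} \<union> {z\<in>X. (S^^n) z \<in> Q}" for n
  have opO: "op (Op n)" for n unfolding Op_def using op_pre[OF assms(1)] op_preS[OF assms(1)] by blast
  have "\<forall>n. \<exists>G. open G \<and> Op n = X \<inter> G" using opO openin_open by blast
  then obtain G where G: "\<And>n. open (G n)" "\<And>n. Op n = X \<inter> G n" by metis
  obtain H where H: "open H" "Q = X \<inter> H" using assms(1) openin_open by blast
  obtain q0 where q0: "q0 \<in> Q" using assms(2) by blast
  have covX: "X \<subseteq> (\<Union>n\<in>UNIV. G n)"
  proof
    fix z assume z: "z \<in> X"
    have "q0 \<in> closure (orbit X T z)" using mini z q0 H by auto
    then have "H \<inter> orbit X T z \<noteq> {}" using open_Int_closure_eq_empty[OF H(1)] q0 H by blast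
    then obtain y where y: "y \<in> H" "y \<in> X" "\<exists>n. (T^^n) z = y \<or> (T^^n) y = z"
      unfolding orbit_def by blast
    then obtain n where n: "(T^^n) z = y \<or> (T^^n) y = z" by blast
    have yQ: "y \<in> Q" using y H by blast
    have "z \<in> Op n"
    proof (cases "(T^^n) z = y")
      case True then show ?thesis using z yQ unfolding Op_def by blast
    next
      case False
      then have "(T^^n) y = z" using n by blast
      then have "(S^^n) z = y" using ST y(2) by blast
      then show ?thesis using z yQ unfolding Op_def by blast
    qed
    then show "z \<in> (\<Union>n\<in>UNIV. G n)" using G by blast
  qed
  obtain C where C: "finite C" "X \<subseteq> (\<Union>n\<in>C. G n)"
  proof -
    show ?thesis
      apply (rule compactE_image[of X UNIV G])
      using cpt G(1) covX that by auto
  qed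
  obtain N where N: "C \<subseteq> {..<N}" using finite_nat_bounded[OF C(1)] by blast
  show ?thesis
  proof (rule exI[of _ N], rule ballI)
    fix z assume z: "z \<in> X"
    from C(2) z obtain j where j: "j \<in> C" "z \<in> G j" by blast
    have zO: "z \<in> Op j" using G(2)[of j] j(2) z by blast
    have "(T^^j) z \<in> Q \<or> (\<exists>q\<in>Q. (T^^j) q = z)"
    proof (cases "(T^^j) z \<in> Q")
      case True then show ?thesis by blast
    next
      case False
      then have "(S^^j) z \<in> Q" using zO unfolding Op_def by blast
      moreover have "(T^^j) ((S^^j) z) = z" using TS[OF z] .
      ultimately show ?thesis by blast
    qed
    moreover have "j \<le> N" using j N by auto
    ultimately show "\<exists>j\<le>N. (T^^j) z \<in> Q \<or> (\<exists>q\<in>Q. (T^^j) q = z)" by blast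
  qed
qed

lemma synd:
  assumes "op Q" "Q \<noteq> {}" "P \<subseteq> X" "P \<noteq> {}"
  shows "\<exists>L. \<forall>m. \<exists>k\<le>L. m+k \<in> NN P Q"
proof -
  obtain N where N: "\<forall>z\<in>X. \<exists>j\<le>N. (T^^j) z \<in> Q \<or> (\<exists>q\<in>Q. (T^^j) q = z)"
    using cover[OF assms(1,2)] by blast
  obtain x where x: "x \<in> P" using assms by blast
  have xX: "x \<in> X" using x assms by blast
  show ?thesis
  proof (rule exI[of _ "2*N"], rule allI)
    fix m
    have zX: "(T^^(m+N)) x \<in> X" using Tn_in xX by blast
    then obtain j where j: "j \<le> N" "(T^^j) ((T^^(m+N)) x) \<in> Q \<or> (\<exists>q\<in>Q. (T^^j) q = (T^^(m+N)) x)"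
      using N by blast
    show "\<exists>k\<le>2*N. m+k \<in> NN P Q"
    proof (cases "(T^^j) ((T^^(m+N)) x) \<in> Q")
      case True
      then have "(T^^(m+(N+j))) x \<in> Q" by (simp add: TT add.commute add.left_commute)
      then show ?thesis using x j unfolding NN_def by (intro exI[of _ "N+j"]) auto
    next
      case False
      then obtain q where q: "q \<in> Q" "(T^^j) q = (T^^(m+N)) x" using j by blast
      have "(T^^j) ((T^^(m+N-j)) x) = (T^^(m+N)) x" using j(1) by (simp add: TT)
      moreover have "q \<in> X" using q op_sub[OF assms(1)] by blast
      ultimately have "q = (T^^(m+N-j)) x" using q Tn_inj Tn_in xX by metis
      then have "(T^^(m+(N-j))) x \<in> Q" using q j(1) by (simp add: add_diff_assoc)
      then show ?thesis using x j unfolding NN_def by (intro exI[of _ "N-j"]) auto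
    qed
  qed
qed

lemma thick:
  "op P \<Longrightarrow> op Q \<Longrightarrow> P \<noteq> {} \<Longrightarrow> Q \<noteq> {} \<Longrightarrow> \<exists>m. \<forall>i\<le>L. m+i \<in> NN P Q"
proof (induction L arbitrary: P Q)
  case 0
  then obtain n where "n \<in> NN P Q" using two_pair[of P P Q Q] by blast
  then show ?case by (intro exI[of _ n]) simp
next
  case (Suc L)
  define Q' where "Q' = {x\<in>X. (T^^1) x \<in> Q}"
  have oQ': "op Q'" unfolding Q'_def using op_pre Suc.prems by blast
  have nQ': "Q' \<noteq> {}" unfolding Q'_def using pre_ne op_sub Suc.prems by blast
  obtain k where k: "k \<in> NN P P" "k \<in> NN Q Q'"
    using two_pair[of P Q P Q'] Suc.prems oQ' nQ' by blast
  define P2 where "P2 = P \<inter> {x\<in>X. (T^^k) x \<in> P}"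
  define Q2 where "Q2 = Q \<inter> {x\<in>X. (T^^k) x \<in> Q'}"
  have o2: "op P2" "op Q2" unfolding P2_def Q2_def
    using op_pre Suc.prems oQ' by (simp_all add: openin_Int)
  have n2: "P2 \<noteq> {}" "Q2 \<noteq> {}" using k op_sub Suc.prems
    unfolding P2_def Q2_def NN_def by blast+
  obtain m where m: "\<forall>i\<le>L. m+i \<in> NN P2 Q2" using Suc.IH[OF o2 n2] by blast
  have key: "n \<in> NN P Q \<and> Suc n \<in> NN P Q" if hn: "n \<in> NN P2 Q2" for n
  proof -
    obtain x where x: "x \<in> P2" "(T^^n) x \<in> Q2" using hn unfolding NN_def by blast
    have a: "n \<in> NN P Q" using x unfolding P2_def Q2_def NN_def by blast
    have b1: "(T^^k) x \<in> P" using x unfolding P2_def by blast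
    have "(T^^1) ((T^^k) ((T^^n) x)) \<in> Q" using x unfolding Q2_def Q'_def by blast
    then have "(T^^(Suc n)) ((T^^k) x) \<in> Q" by (simp add: TT add.commute add.left_commute)
    then show ?thesis using a b1 unfolding NN_def by blast
  qed
  show ?case
  proof (rule exI[of _ m], intro allI impI)
    fix i assume i: "i \<le> Suc L"
    show "m + i \<in> NN P Q"
    proof (cases "i \<le> L")
      case True
      then have "m + i \<in> NN P2 Q2" using m by blast
      then show ?thesis using key by blast
    next
      case False
      then have "i = Suc L" using i by simp
      have "m + L \<in> NN P2 Q2" using m by blast
      then have "Suc (m + L) \<in> NN P Q" using key by blast
      then show ?thesis using \<open>i = Suc L\<close> by simp
    qed
  qed
qed

lemma K3:
  assumes "op P1" "op Q1" "op P2" "op Q2" "P1 \<noteq> {}" "Q1 \<noteq> {}" "P2 \<noteq> {}" "Q2 \<noteq> {}"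
  shows "\<exists>n. n \<in> NN P1 Q1 \<and> 2*n \<in> NN P2 Q2"
proof -
  obtain L where L: "\<forall>m. \<exists>k\<le>L. m+k \<in> NN P1 Q1"
    using synd[OF assms(2,6) op_sub[OF assms(1)] assms(5)] by blast
  obtain m where m: "\<forall>i\<le>2*L+1. m+i \<in> NN P2 Q2"
    using thick[OF assms(3,4,7,8)] by blast
  define n0 where "n0 = (m+1) div 2"
  obtain k where k: "k \<le> L" "n0+k \<in> NN P1 Q1" using L by blast
  have "m \<le> 2*n0" "2*n0 \<le> m+1" unfolding n0_def by presburger+
  then have "m + (2*(n0+k) - m) = 2*(n0+k)" by arith
  moreover have "2*(n0+k) - m \<le> 2*L+1" using k(1) \<open>2*n0 \<le> m+1\<close> by arith
  ultimately have "2*(n0+k) \<in> NN P2 Q2" using m by metis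
  then show ?thesis using k by blast
qed

end

context wmsys begin

definition dense_rect where
  "dense_rect D W1 W2 \<longleftrightarrow> (\<forall>V1 V2. op V1 \<longrightarrow> op V2 \<longrightarrow> V1 \<noteq> {} \<longrightarrow> V2 \<noteq> {}
      \<longrightarrow> V1 \<subseteq> W1 \<longrightarrow> V2 \<subseteq> W2 \<longrightarrow> D \<inter> (V1 \<times> V2) \<noteq> {})"

lemma union_split:
  assumes "dense_rect (A \<union> B) W1 W2" "op W1" "op W2" "W1 \<noteq> {}" "W2 \<noteq> {}"
  shows "\<exists>V1 V2. op V1 \<and> op V2 \<and> V1 \<noteq> {} \<and> V2 \<noteq> {} \<and> (dense_rect A V1 V2 \<or> dense_rect B V1 V2)"
proof (cases "dense_rect A W1 W2")
  case True then show ?thesis using assms by blast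
next
  case False
  then obtain V1 V2 where V: "op V1" "op V2" "V1 \<noteq> {}" "V2 \<noteq> {}" "V1 \<subseteq> W1" "V2 \<subseteq> W2"
    "A \<inter> (V1 \<times> V2) = {}" unfolding dense_rect_def by blast
  have "dense_rect B V1 V2" unfolding dense_rect_def
  proof (intro allI impI)
    fix V1' V2' assume h: "op V1'" "op V2'" "V1' \<noteq> {}" "V2' \<noteq> {}" "V1' \<subseteq> V1" "V2' \<subseteq> V2"
    have "(A \<union> B) \<inter> (V1' \<times> V2') \<noteq> {}"
      using assms(1) h V(5,6) unfolding dense_rect_def by (meson order_trans)
    moreover have "A \<inter> (V1' \<times> V2') = {}" using V(7) h(5,6) by blast
    ultimately show "B \<inter> (V1' \<times> V2') \<noteq> {}" by blast
  qed
  then show ?thesis using V by blast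
qed

lemma finite_split:
  assumes "finite J"
  shows "dense_rect (\<Union>j\<in>J. D j) W1 W2 \<Longrightarrow> op W1 \<Longrightarrow> op W2 \<Longrightarrow> W1 \<noteq> {} \<Longrightarrow> W2 \<noteq> {}
    \<Longrightarrow> \<exists>j\<in>J. \<exists>V1 V2. op V1 \<and> op V2 \<and> V1 \<noteq> {} \<and> V2 \<noteq> {} \<and> dense_rect (D j) V1 V2"
  using assms
proof (induction J arbitrary: W1 W2 rule: finite_induct)
  case empty
  then show ?case unfolding dense_rect_def by blast
next
  case (insert j J)
  have "dense_rect (D j \<union> (\<Union>i\<in>J. D i)) W1 W2" using insert.prems(1) by (simp only: UN_insert)
  then have "\<exists>V1 V2. op V1 \<and> op V2 \<and> V1 \<noteq> {} \<and> V2 \<noteq> {} \<and>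
    (dense_rect (D j) V1 V2 \<or> dense_rect (\<Union>i\<in>J. D i) V1 V2)"
    using insert.prems(2-5) by (rule union_split)
  then obtain V1 V2 where V: "op V1" "op V2" "V1 \<noteq> {}" "V2 \<noteq> {}"
    "dense_rect (D j) V1 V2 \<or> dense_rect (\<Union>i\<in>J. D i) V1 V2" by blast
  show ?case
  proof (cases "dense_rect (D j) V1 V2")
    case True
    then have "\<exists>V1 V2. op V1 \<and> op V2 \<and> V1 \<noteq> {} \<and> V2 \<noteq> {} \<and> dense_rect (D j) V1 V2"
      using V(1-4) by blast
    then show ?thesis by (intro bexI[of _ j]) auto
  next
    case False
    then have "dense_rect (\<Union>i\<in>J. D i) V1 V2" using V(5) by (meson disjE)
    from insert.IH[OF this V(1-4)] obtain i where
      "i \<in> J" "\<exists>V1 V2. op V1 \<and> op V2 \<and> V1 \<noteq> {} \<and> V2 \<noteq> {} \<and> dense_rect (D i) V1 V2" ..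
    then show ?thesis by (intro bexI[of _ i]) auto
  qed
qed

lemma op_pre_gen:
  assumes "homeomorphism X X g g'" "op W"
  shows "op {x\<in>X. g x \<in> W}"
proof -
  obtain G where G: "open G" "W = X \<inter> G" using assms openin_open by blast
  have c: "continuous_on X g" and im: "g ` X = X" using assms(1) unfolding homeomorphism_def by blast+
  have "{x\<in>X. g x \<in> W} = X \<inter> g -` G" using G im by auto
  then show ?thesis using continuous_openin_preimage_gen[OF c G(1)] by simp
qed

lemma pullback:
  assumes hg: "homeomorphism X X g g'" and hh: "homeomorphism X X h h'"
    and EX: "E \<subseteq> X \<times> X" and d: "dense_rect (map_prod g h ` E) W1 W2"
    and W: "op W1" "op W2" "W1 \<noteq> {}" "W2 \<noteq> {}"
  shows "op {x\<in>X. g x \<in> W1} \<and> op {x\<in>X. h x \<in> W2} \<and> {x\<in>X. g x \<in> W1} \<noteq> {}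
     \<and> {x\<in>X. h x \<in> W2} \<noteq> {} \<and> dense_rect E {x\<in>X. g x \<in> W1} {x\<in>X. h x \<in> W2}"
proof -
  have o: "op {x\<in>X. g x \<in> W1}" "op {x\<in>X. h x \<in> W2}"
    using op_pre_gen[OF hg W(1)] op_pre_gen[OF hh W(2)] by blast+
  obtain w1 w2 where w: "w1 \<in> W1" "w2 \<in> W2" using W by blast
  have wX: "w1 \<in> X" "w2 \<in> X" using w op_sub W(1,2) by blast+
  have "g' w1 \<in> X" "h' w2 \<in> X"
    using wX homeomorphism_image2[OF hg] homeomorphism_image2[OF hh] by blast+
  moreover have "g (g' w1) = w1" "h (h' w2) = w2"
    using wX homeomorphism_apply2[OF hg] homeomorphism_apply2[OF hh] by blast+
  ultimately have "g' w1 \<in> {x\<in>X. g x \<in> W1}" "h' w2 \<in> {x\<in>X. h x \<in> W2}"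
    using w by simp_all
  then have ne: "{x\<in>X. g x \<in> W1} \<noteq> {}" "{x\<in>X. h x \<in> W2} \<noteq> {}" by blast+
  have "dense_rect E {x\<in>X. g x \<in> W1} {x\<in>X. h x \<in> W2}" unfolding dense_rect_def
  proof (intro allI impI)
    fix V1 V2 assume V: "op V1" "op V2" "V1 \<noteq> {}" "V2 \<noteq> {}"
      "V1 \<subseteq> {x\<in>X. g x \<in> W1}" "V2 \<subseteq> {x\<in>X. h x \<in> W2}"
    have oi: "op (g ` V1)" "op (h ` V2)"
      using homeomorphism_imp_open_map[OF hg V(1)] homeomorphism_imp_open_map[OF hh V(2)] by blast+
    have si: "g ` V1 \<subseteq> W1" "h ` V2 \<subseteq> W2" using V(5,6) by blast+
    have ni: "g ` V1 \<noteq> {}" "h ` V2 \<noteq> {}" using V(3,4) by blast+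
    have "map_prod g h ` E \<inter> (g ` V1 \<times> h ` V2) \<noteq> {}"
      using d oi si ni unfolding dense_rect_def by blast
    then have "\<exists>p. p \<in> map_prod g h ` E \<inter> (g ` V1 \<times> h ` V2)" by (simp only: ex_in_conv not_False_eq_True)
    then obtain p where p0: "p \<in> map_prod g h ` E \<inter> (g ` V1 \<times> h ` V2)" ..
    have p: "p \<in> map_prod g h ` E" "p \<in> g ` V1 \<times> h ` V2" using p0 by (rule IntD1, rule IntD2)
    from p(1) obtain e where e1: "e \<in> E" "p = map_prod g h e" by (rule imageE) simp
    from p(2) have pp: "fst p \<in> g ` V1" "snd p \<in> h ` V2" by (simp_all add: mem_Times_iff)
    from pp(1) obtain v1 where v1: "v1 \<in> V1" "fst p = g v1" by (rule imageE) simp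
    from pp(2) obtain v2 where v2: "v2 \<in> V2" "snd p = h v2" by (rule imageE) simp
    note v = v1(1) v2(1) v1(2) v2(2)
    have "fst p = g (fst e)" "snd p = h (snd e)" using e1(2) by (cases e; simp)+
    then have e: "e \<in> E" "v1 \<in> V1" "v2 \<in> V2" "g (fst e) = g v1" "h (snd e) = h v2"
      using e1 v by simp_all
    have "fst e \<in> X" "snd e \<in> X" using e(1) EX by auto
    moreover have "v1 \<in> X" "v2 \<in> X" using e(2,3) V(5,6) by auto
    ultimately have "fst e = v1" "snd e = v2"
      using e(4,5) homeomorphism_apply1[OF hg] homeomorphism_apply1[OF hh] by metis+
    then have "e \<in> V1 \<times> V2" using e(2,3) by (cases e) auto
    then show "E \<inter> (V1 \<times> V2) \<noteq> {}" using e(1) by blast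
  qed
  then show ?thesis using o ne by blast
qed

end

context wmsys begin

lemma TTe: "a + b = c \<Longrightarrow> (T^^a) ((T^^b) x) = (T^^c) x"
  using TT[of a b x] by (simp only:)

lemma K:
  assumes U: "op U" "U \<noteq> {}" and V: "op V1" "op V2" "V1 \<noteq> {}" "V2 \<noteq> {}"
  shows "\<exists>x\<in>U. \<exists>n. (T^^n) x \<in> V1 \<and> (T^^(2*n)) x \<in> V2"
proof -
  obtain N where N: "\<forall>z\<in>X. \<exists>j\<le>N. (T^^j) z \<in> U \<or> (\<exists>q\<in>U. (T^^j) q = z)"
    using cover[OF U] by blast
  have UX: "U \<subseteq> X" using op_sub[OF U(1)] .
  define E where "E = {((T^^m) u, (T^^(2*m)) u) | u m. u \<in> U}"
  have EX: "E \<subseteq> X \<times> X" unfolding E_def using UX Tn_in by auto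
  define D where "D j = map_prod id (T^^j) ` E \<union> map_prod (T^^j) (T^^j) ` E" for j
  have hid: "homeomorphism X X id id" using homeomorphism_ident[of X] by (simp add: id_def)
  have dense0: "dense_rect (\<Union>j\<in>{..N}. D j) X X" unfolding dense_rect_def
  proof (intro allI impI)
    fix W1 W2 assume W: "op W1" "op W2" "W1 \<noteq> {}" "W2 \<noteq> {}" "W1 \<subseteq> X" "W2 \<subseteq> X"
    define Q where "Q = {w\<in>X. (T^^N) w \<in> W2}"
    have oQ: "op Q" unfolding Q_def using op_pre W(2) by blast
    have nQ: "Q \<noteq> {}" unfolding Q_def using pre_ne W(4,6) by blast
    obtain m where "m \<in> NN W1 Q" using two_pair[OF W(1) W(1) oQ oQ W(3) W(3) nQ nQ] by blast
    then obtain z where z: "z \<in> W1" "(T^^m) z \<in> Q" unfolding NN_def by blast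
    define n where "n = m + N"
    have zX: "z \<in> X" using z W(5) by blast
    define y where "y = (S^^n) z"
    have yX: "y \<in> X" unfolding y_def using Sn_in zX .
    have y1: "(T^^n) y = z" unfolding y_def using TS zX .
    have "(T^^(2*n)) y = (T^^n) ((T^^n) y)" by (rule TTe[symmetric]) simp
    also have "\<dots> = (T^^(m+N)) z" using y1 unfolding n_def by simp
    also have "\<dots> = (T^^N) ((T^^m) z)" by (rule TTe[symmetric]) simp
    finally have y2: "(T^^(2*n)) y \<in> W2" using z(2) unfolding Q_def by simp
    obtain j where j: "j \<le> N" "(T^^j) y \<in> U \<or> (\<exists>q\<in>U. (T^^j) q = y)" using N yX by blast
    have jn: "j \<le> n" using j(1) unfolding n_def by simp
    have inD: "((T^^n) y, (T^^(2*n)) y) \<in> D j"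
    proof (cases "(T^^j) y \<in> U")
      case True
      define u where "u = (T^^j) y"
      define m' where "m' = n - j"
      have "((T^^m') u, (T^^(2*m')) u) \<in> E" unfolding E_def using True u_def by blast
      moreover have "(T^^m') u = (T^^n) y" unfolding u_def m'_def using jn by (intro TTe) simp
      moreover have "(T^^j) ((T^^(2*m')) u) = (T^^(2*n)) y"
      proof -
        have "(T^^(2*m')) u = (T^^(2*m'+j)) y" unfolding u_def by (rule TTe) simp
        moreover have "j + (2*m'+j) = 2*n" unfolding m'_def using jn by arith
        ultimately show ?thesis by (simp only: TTe)
      qed
      ultimately have "((T^^n) y, (T^^(2*n)) y) \<in> map_prod id (T^^j) ` E"
        by (metis (no_types, lifting) id_apply image_eqI map_prod_simp)
      then show ?thesis unfolding D_def by (rule UnI1)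
    next
      case False
      then obtain u where u: "u \<in> U" "(T^^j) u = y" using j(2) by blast
      have "((T^^n) u, (T^^(2*n)) u) \<in> E" unfolding E_def using u(1) by blast
      moreover have "(T^^j) ((T^^n) u) = (T^^n) y" "(T^^j) ((T^^(2*n)) u) = (T^^(2*n)) y"
        using u(2) commT by metis+
      ultimately have "((T^^n) y, (T^^(2*n)) y) \<in> map_prod (T^^j) (T^^j) ` E"
        by (metis (no_types, lifting) image_eqI map_prod_simp)
      then show ?thesis unfolding D_def by (rule UnI2)
    qed
    have "((T^^n) y, (T^^(2*n)) y) \<in> (\<Union>j\<in>{..N}. D j)" using inD j(1) by blast
    moreover have "((T^^n) y, (T^^(2*n)) y) \<in> W1 \<times> W2" using y1 y2 z(1) by simp
    ultimately show "(\<Union>j\<in>{..N}. D j) \<inter> (W1 \<times> W2) \<noteq> {}" by blast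
  qed
  have oX: "op X" by simp
  have nX: "X \<noteq> {}" using UX U(2) by blast
  obtain j W1 W2 where jW: "op W1" "op W2" "W1 \<noteq> {}" "W2 \<noteq> {}" "dense_rect (D j) W1 W2"
    using finite_split[of "{..N}" D X X, OF _ dense0 oX oX nX nX] by blast
  have "\<exists>V1 V2. op V1 \<and> op V2 \<and> V1 \<noteq> {} \<and> V2 \<noteq> {} \<and>
     (dense_rect (map_prod id (T^^j) ` E) V1 V2 \<or> dense_rect (map_prod (T^^j) (T^^j) ` E) V1 V2)"
    using jW(5)[unfolded D_def] jW(1-4) by (rule union_split)
  then obtain W1' W2' where W': "op W1'" "op W2'" "W1' \<noteq> {}" "W2' \<noteq> {}"
    "dense_rect (map_prod id (T^^j) ` E) W1' W2' \<or> dense_rect (map_prod (T^^j) (T^^j) ` E) W1' W2'"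
    by blast
  have "\<exists>P1 P2. op P1 \<and> op P2 \<and> P1 \<noteq> {} \<and> P2 \<noteq> {} \<and> dense_rect E P1 P2"
  proof (cases "dense_rect (map_prod id (T^^j) ` E) W1' W2'")
    case True
    from pullback[OF hid homn EX True W'(1-4)] show ?thesis by blast
  next
    case False
    then have "dense_rect (map_prod (T^^j) (T^^j) ` E) W1' W2'" using W'(5) by (meson disjE)
    from pullback[OF homn homn EX this W'(1-4)] show ?thesis by blast
  qed
  then obtain P1 P2 where P: "op P1" "op P2" "P1 \<noteq> {}" "P2 \<noteq> {}" "dense_rect E P1 P2" by blast
  obtain n where n: "n \<in> NN P1 V1" "2*n \<in> NN P2 V2"
    using K3[OF P(1) V(1) P(2) V(2) P(3) V(3) P(4) V(4)] by blast
  define P1' where "P1' = P1 \<inter> {x\<in>X. (T^^n) x \<in> V1}"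
  define P2' where "P2' = P2 \<inter> {x\<in>X. (T^^(2*n)) x \<in> V2}"
  have o': "op P1'" "op P2'" unfolding P1'_def P2'_def using P V op_pre by (simp_all add: openin_Int)
  have n': "P1' \<noteq> {}" "P2' \<noteq> {}" using n P op_sub unfolding P1'_def P2'_def NN_def by blast+
  have s': "P1' \<subseteq> P1" "P2' \<subseteq> P2" unfolding P1'_def P2'_def by blast+
  have "E \<inter> (P1' \<times> P2') \<noteq> {}" using P(5) o' n' s' unfolding dense_rect_def by blast
  then have "\<exists>e. e \<in> E \<inter> (P1' \<times> P2')" by (simp only: ex_in_conv not_False_eq_True)
  then obtain e where e0: "e \<in> E \<inter> (P1' \<times> P2')" ..
  have e: "e \<in> E" "e \<in> P1' \<times> P2'" using e0 by (rule IntD1, rule IntD2)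
  from e(1) obtain u m where um: "u \<in> U" "e = ((T^^m) u, (T^^(2*m)) u)" unfolding E_def by blast
  have "(T^^n) ((T^^m) u) \<in> V1" "(T^^(2*n)) ((T^^(2*m)) u) \<in> V2"
    using e(2) um(2) unfolding P1'_def P2'_def by auto
  moreover have "(T^^n) ((T^^m) u) = (T^^(n+m)) u" "(T^^(2*n)) ((T^^(2*m)) u) = (T^^(2*(n+m))) u"
    by (rule TTe, simp)+
  ultimately have "(T^^(n+m)) u \<in> V1" "(T^^(2*(n+m))) u \<in> V2" by simp_all
  then show ?thesis using um(1) by blast
qed

end


lemma TT2: "((T::'a\<Rightarrow>'a) \<circ> T)^^n = T^^(2*n)"
  by (induction n) (auto simp: funpow_Suc_right)

lemma dist_pair_le: "dist (a, b) (c, d) \<le> dist a c + dist b d"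
proof -
  have "dist (a, b) (c, d) = sqrt ((dist a c)^2 + (dist b d)^2)" by (simp add: dist_Pair_Pair)
  also have "\<dots> \<le> \<bar>dist a c\<bar> + \<bar>dist b d\<bar>" by (rule sqrt_sum_squares_le_sum_abs)
  finally show ?thesis by simp
qed

lemma countable_dense:
  fixes X :: "'a::metric_space set"
  assumes "compact X"
  shows "\<exists>DD. countable DD \<and> DD \<subseteq> X \<and> (\<forall>p\<in>X. \<forall>e>0. \<exists>d\<in>DD. dist p d < e)"
proof -
  have "\<exists>F. finite F \<and> F \<subseteq> X \<and> X \<subseteq> (\<Union>c\<in>F. ball c (1/Suc k))" for k::nat
  proof -
    have cov: "X \<subseteq> (\<Union>c\<in>X. ball c (1/Suc k))" by auto
    show ?thesis
      apply (rule compactE_image[of X X "\<lambda>c. ball c (1/Suc k)"])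
      using assms cov by auto
  qed
  then obtain F where F: "\<And>k. finite (F k)" "\<And>k. F k \<subseteq> X" "\<And>k. X \<subseteq> (\<Union>c\<in>F k. ball c (1/Suc k))"
    by metis
  define DD where "DD = (\<Union>k. F k)"
  have "countable DD" unfolding DD_def using F(1) by (simp add: countable_finite)
  moreover have "DD \<subseteq> X" unfolding DD_def using F(2) by blast
  moreover have "\<forall>p\<in>X. \<forall>e>0. \<exists>d\<in>DD. dist p d < e"
  proof (intro ballI allI impI)
    fix p e assume p: "p \<in> X" and e: "(e::real) > 0"
    from reals_Archimedean[OF e] obtain k where k: "inverse (of_nat (Suc k)) < e" ..
    obtain c where c: "c \<in> F k" "p \<in> ball c (1/Suc k)" using F(3) p by blast
    have "dist p c < e" using c(2) k by (simp add: dist_commute divide_inverse)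
    moreover have "c \<in> DD" unfolding DD_def using c(1) by blast
    ultimately show "\<exists>d\<in>DD. dist p d < e" by blast
  qed
  ultimately show ?thesis by blast
qed

theorem mainTheorem9:
  fixes X :: "'a::metric_space set" and T :: "'a \<Rightarrow> 'a"
  assumes "minimal_sys X T" and "weakly_mixing X T"
  defines "A \<equiv> {x \<in> X. minimal_point (X \<times> X) (map_prod T (T \<circ> T)) (x, x)}"
  shows "A = X \<or> (A \<noteq> {} \<and> first_category_in X A) \<or> A = {}"
proof -
  obtain S' where hom: "homeomorphism X X T S'" and cpt: "compact X"
    and mini: "\<forall>x\<in>X. closure (orbit X T x) = X"
    using assms(1) unfolding minimal_sys_def tds_def by blast
  have wm: "transitive_sys (X \<times> X) (map_prod T T)" using assms(2) unfolding weakly_mixing_def by blast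
  interpret W: wmsys X T S' using hom cpt mini wm by unfold_locales
  define Sm where "Sm = map_prod T (T \<circ> T)"
  have pow: "(Sm^^n) (x,x) = ((T^^n) x, (T^^(2*n)) x)" for n x
    unfolding Sm_def by (simp add: mp_pow TT2)
  have AX: "A \<subseteq> X" unfolding A_def by blast
  show ?thesis
  proof (cases "\<exists>x\<in>A. closure (orbit (X \<times> X) Sm (x, x)) = X \<times> X")
    case True
    then obtain x where x: "x \<in> A" "closure (orbit (X \<times> X) Sm (x, x)) = X \<times> X" by blast
    have "minimal_sys (closure (orbit (X \<times> X) Sm (x, x))) Sm"
      using x(1) unfolding A_def minimal_point_def Sm_def by blast
    then have ms: "minimal_sys (X \<times> X) Sm" using x(2) by simp
    then have allp: "\<forall>p\<in>X \<times> X. closure (orbit (X \<times> X) Sm p) = X \<times> X"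
      unfolding minimal_sys_def by blast
    have "X \<subseteq> A"
    proof
      fix y assume y: "y \<in> X"
      then have "closure (orbit (X \<times> X) Sm (y, y)) = X \<times> X" using allp by blast
      then have "minimal_point (X \<times> X) Sm (y, y)" unfolding minimal_point_def using ms y by simp
      then show "y \<in> A" unfolding A_def Sm_def using y by blast
    qed
    then show ?thesis using AX by blast
  next
    case False
    obtain DD where DD: "countable DD" "DD \<subseteq> X" "\<forall>p\<in>X. \<forall>e>0. \<exists>d\<in>DD. dist p d < e"
      using countable_dense[OF cpt] by blast
    define Fs where "Fs d1 d2 k = {x\<in>X. \<forall>n. \<not> ((T^^n) x \<in> ball d1 (inverse (real (Suc k)))
                     \<and> (T^^(2*n)) x \<in> ball d2 (inverse (real (Suc k))))}" for d1 d2 and k :: nat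
    define Fam where "Fam = (\<lambda>(d1, d2, k). Fs d1 d2 k) ` (DD \<times> DD \<times> (UNIV :: nat set))"
    have cF: "countable Fam" unfolding Fam_def
      by (intro countable_image countable_SIGMA DD(1) countableI_type)
    have ndF: "nowhere_dense_in X B" if B: "B \<in> Fam" for B
    proof -
      from B obtain t where t: "t \<in> DD \<times> DD \<times> (UNIV :: nat set)" "B = (\<lambda>(d1, d2, k). Fs d1 d2 k) t"
        unfolding Fam_def by (rule imageE)
      obtain d1 d2 k where tt: "t = (d1, d2, k)" by (cases t)
      have dk: "d1 \<in> DD" "d2 \<in> DD" "B = Fs d1 d2 k" using t tt by simp_all
      define r where "r = inverse (real (Suc k))"
      have r: "r > 0" unfolding r_def by simp
      define V1 where "V1 = X \<inter> ball d1 r"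
      define V2 where "V2 = X \<inter> ball d2 r"
      have oV: "W.op V1" "W.op V2" unfolding V1_def V2_def by (simp_all add: openin_open_Int)
      have nV: "V1 \<noteq> {}" "V2 \<noteq> {}" unfolding V1_def V2_def using dk DD(2) r by auto
      have BX: "B \<subseteq> X" unfolding dk Fs_def by blast
      have "(top_of_set X) interior_of ((top_of_set X) closure_of B) = {}"
      proof (rule ccontr)
        assume "(top_of_set X) interior_of ((top_of_set X) closure_of B) \<noteq> {}"
        then obtain z where "z \<in> (top_of_set X) interior_of ((top_of_set X) closure_of B)" by blast
        then obtain U where U: "W.op U" "z \<in> U" "U \<subseteq> (top_of_set X) closure_of B"
          unfolding interior_of_def by blast
        have nU: "U \<noteq> {}" using U(2) by blast
        obtain x n where xn: "x \<in> U" "(T^^n) x \<in> V1" "(T^^(2*n)) x \<in> V2"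
          using W.K[OF U(1) nU oV nV] by blast
        define G where "G = U \<inter> {y\<in>X. (T^^n) y \<in> V1} \<inter> {y\<in>X. (T^^(2*n)) y \<in> V2}"
        have oG: "W.op G" unfolding G_def using U(1) oV W.op_pre by (simp add: openin_Int)
        have xX: "x \<in> X" using xn(1) W.op_sub[OF U(1)] by blast
        have xG: "x \<in> G" unfolding G_def using xn xX by blast
        have "x \<in> (top_of_set X) closure_of B" using U(3) xn(1) by blast
        then obtain y where y: "y \<in> B" "y \<in> G" using xG oG unfolding in_closure_of by blast
        then have "(T^^n) y \<in> ball d1 r" "(T^^(2*n)) y \<in> ball d2 r"
          unfolding G_def V1_def V2_def by auto
        moreover have "\<not> ((T^^n) y \<in> ball d1 r \<and> (T^^(2*n)) y \<in> ball d2 r)"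
          using y(1) unfolding dk Fs_def r_def by blast
        ultimately show False by blast
      qed
      then show ?thesis unfolding nowhere_dense_in_def using BX by blast
    qed
    have cov: "A \<subseteq> \<Union>Fam"
    proof
      fix x assume xA: "x \<in> A"
      then have xX: "x \<in> X" using AX by blast
      have ne: "closure (orbit (X \<times> X) Sm (x, x)) \<noteq> X \<times> X" using False xA by blast
      have orbX: "orbit (X \<times> X) Sm (x, x) \<subseteq> X \<times> X" unfolding orbit_def by blast
      have "closed (X \<times> X)" using cpt by (simp add: compact_Times compact_imp_closed)
      then have "closure (orbit (X \<times> X) Sm (x, x)) \<subseteq> X \<times> X" using orbX closure_minimal by blast
      then obtain pq where pq: "pq \<in> X \<times> X" "pq \<notin> closure (orbit (X \<times> X) Sm (x, x))" using ne by blast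
      then obtain e where e: "e > 0" "\<forall>y\<in>orbit (X \<times> X) Sm (x, x). \<not> dist y pq < e"
        unfolding closure_approachable by blast
      obtain p q where pqd: "pq = (p, q)" by (cases pq)
      have pX: "p \<in> X" "q \<in> X" using pq(1) pqd by auto
      have e4: "e/4 > 0" using e(1) by simp
      from reals_Archimedean[OF e4] obtain k where k: "inverse (of_nat (Suc k)) < e/4" ..
      define r where "r = inverse (real (Suc k))"
      have r: "r > 0" "r < e/4" unfolding r_def using k by simp_all
      obtain d1 where d1: "d1 \<in> DD" "dist p d1 < r" using DD(3) pX(1) r(1) by blast
      obtain d2 where d2: "d2 \<in> DD" "dist q d2 < r" using DD(3) pX(2) r(1) by blast
      have "x \<in> Fs d1 d2 k" unfolding Fs_def
      proof (intro CollectI conjI allI notI xX)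
        fix n assume h: "(T^^n) x \<in> ball d1 (inverse (real (Suc k))) \<and> (T^^(2*n)) x \<in> ball d2 (inverse (real (Suc k)))"
        have iX: "(T^^n) x \<in> X" "(T^^(2*n)) x \<in> X" using W.Tn_in xX by blast+
        have "((T^^n) x, (T^^(2*n)) x) \<in> orbit (X \<times> X) Sm (x, x)"
          unfolding orbit_def using iX pow[of n x] by auto
        then have ge: "\<not> dist ((T^^n) x, (T^^(2*n)) x) (p, q) < e" using e(2) pqd by blast
        have "dist ((T^^n) x) p \<le> dist ((T^^n) x) d1 + dist d1 p" by (rule dist_triangle)
        moreover have "dist ((T^^(2*n)) x) q \<le> dist ((T^^(2*n)) x) d2 + dist d2 q" by (rule dist_triangle)
        moreover have "dist ((T^^n) x) d1 < r" "dist ((T^^(2*n)) x) d2 < r"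
          using h unfolding r_def by (simp_all add: dist_commute)
        moreover have "dist d1 p < r" "dist d2 q < r" using d1(2) d2(2) by (simp_all add: dist_commute)
        ultimately have "dist ((T^^n) x) p + dist ((T^^(2*n)) x) q < e" using r(2) by linarith
        then have "dist ((T^^n) x, (T^^(2*n)) x) (p, q) < e" using dist_pair_le order_le_less_trans by blast
        then show False using ge by blast
      qed
      moreover have "Fs d1 d2 k \<in> Fam" unfolding Fam_def using d1(1) d2(1) by force
      ultimately show "x \<in> \<Union>Fam" by blast
    qed
    have "first_category_in X A" unfolding first_category_in_def using cF cov ndF by blast
    then show ?thesis by blast
  qed
qed


end
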